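(* For every integer $n>0$, the Hochschild lattice $\mathrm{Hoch}(n)$ has order dimension $n$.
   Context: For a finite directed graph $G$ without multiple edges, a maximal orthogonal pair is a pair $(X,Y)$ of disjoint subsets of the vertex set with no edge from a vertex of $X$ to a vertex of $Y$, maximal (under componentwise inclusion) for this property; these pairs ordered by $(X,Y)\le(X',Y')$ iff $X\subseteq X'$ form a lattice $L(G)$. $\mathrm{Hoch}(n):=L(G_n)$, where $G_n$ has vertices $\{(i,j)\mid i\in\{1,2\},\ i\le j\le n\}$ and edges $(i,j)\to(i',j')$ for $(i,j)\ne(i',j')$ whenever either $i=2$, $i'=1$, $j=j'$, or $i=i'=1$ and $j>j'$ (equivalently, $\mathrm{Hoch}(n)$ is the extremal lattice whose Galois graph is $G_n$). The order dimension of a poset $P$ is the least $d$ such that $P$ embeds as a subposet of $\mathbb R^d$ with the componentwise order. *)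

theory Defs
  imports Complex_Main
begin

text \<open>A digraph is given by a vertex set V and an edge relation E (E u v means an edge u to v).\<close>

definition orth_pair :: "'v set \<Rightarrow> ('v \<Rightarrow> 'v \<Rightarrow> bool) \<Rightarrow> 'v set \<times> 'v set \<Rightarrow> bool" where
  "orth_pair V E p \<longleftrightarrow> fst p \<subseteq> V \<and> snd p \<subseteq> V \<and> fst p \<inter> snd p = {} \<and>
     (\<forall>x\<in>fst p. \<forall>y\<in>snd p. \<not> E x y)"

definition max_orth_pair :: "'v set \<Rightarrow> ('v \<Rightarrow> 'v \<Rightarrow> bool) \<Rightarrow> 'v set \<times> 'v set \<Rightarrow> bool" where
  "max_orth_pair V E p \<longleftrightarrow> orth_pair V E p \<and>
     (\<forall>q. orth_pair V E q \<and> fst p \<subseteq> fst q \<and> snd p \<subseteq> snd q \<longrightarrow> q = p)"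

definition L_carrier :: "'v set \<Rightarrow> ('v \<Rightarrow> 'v \<Rightarrow> bool) \<Rightarrow> ('v set \<times> 'v set) set" where
  "L_carrier V E = {p. max_orth_pair V E p}"

definition L_le :: "'v set \<times> 'v set \<Rightarrow> 'v set \<times> 'v set \<Rightarrow> bool" where
  "L_le p q \<longleftrightarrow> fst p \<subseteq> fst q"

definition Gn_vertices :: "nat \<Rightarrow> (nat \<times> nat) set" where
  "Gn_vertices n = {(i, j). (i = 1 \<or> i = 2) \<and> i \<le> j \<and> j \<le> n}"

definition Gn_edge :: "nat \<Rightarrow> nat \<times> nat \<Rightarrow> nat \<times> nat \<Rightarrow> bool" where
  "Gn_edge n u v \<longleftrightarrow> u \<in> Gn_vertices n \<and> v \<in> Gn_vertices n \<and> u \<noteq> v \<and>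
     ((fst u = 2 \<and> fst v = 1 \<and> snd u = snd v) \<or>
      (fst u = 1 \<and> fst v = 1 \<and> snd u > snd v))"

definition Hoch :: "nat \<Rightarrow> ((nat \<times> nat) set \<times> (nat \<times> nat) set) set" where
  "Hoch n = L_carrier (Gn_vertices n) (Gn_edge n)"

definition embeds_in_Rd :: "'a set \<Rightarrow> ('a \<Rightarrow> 'a \<Rightarrow> bool) \<Rightarrow> nat \<Rightarrow> bool" where
  "embeds_in_Rd S le d \<longleftrightarrow>
     (\<exists>f :: 'a \<Rightarrow> (nat \<Rightarrow> real). inj_on f S \<and>
        (\<forall>x\<in>S. \<forall>y\<in>S. le x y \<longleftrightarrow> (\<forall>i<d. f x i \<le> f y i)))"

definition order_dimension :: "'a set \<Rightarrow> ('a \<Rightarrow> 'a \<Rightarrow> bool) \<Rightarrow> nat" where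
  "order_dimension S le = (LEAST d. embeds_in_Rd S le d)"

end

theory Submission
  imports Defs
begin

definition Yof :: "'v set \<Rightarrow> ('v \<Rightarrow> 'v \<Rightarrow> bool) \<Rightarrow> 'v set \<Rightarrow> 'v set" where
  "Yof V E X = {v\<in>V. v \<notin> X \<and> (\<forall>x\<in>X. \<not> E x v)}"

definition Xof :: "'v set \<Rightarrow> ('v \<Rightarrow> 'v \<Rightarrow> bool) \<Rightarrow> 'v set \<Rightarrow> 'v set" where
  "Xof V E Y = {v\<in>V. v \<notin> Y \<and> (\<forall>y\<in>Y. \<not> E v y)}"

lemma max_orth_iff:
  "max_orth_pair V E (X,Y) \<longleftrightarrow> X \<subseteq> V \<and> Y = Yof V E X \<and> X = Xof V E Y"
proof
  assume m: "max_orth_pair V E (X,Y)"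
  hence o: "orth_pair V E (X,Y)" by (simp add: max_orth_pair_def)
  have o1: "orth_pair V E (X, Yof V E X)" using o by (auto simp: orth_pair_def Yof_def)
  have o2: "orth_pair V E (Xof V E Y, Y)" using o by (auto simp: orth_pair_def Xof_def)
  have s1: "Y \<subseteq> Yof V E X" using o by (auto simp: orth_pair_def Yof_def)
  have s2: "X \<subseteq> Xof V E Y" using o by (auto simp: orth_pair_def Xof_def)
  have "(X, Yof V E X) = (X,Y)" using m o1 s1 unfolding max_orth_pair_def by fastforce
  moreover have "(Xof V E Y, Y) = (X,Y)" using m o2 s2 unfolding max_orth_pair_def by fastforce
  moreover have "X \<subseteq> V" using o by (simp add: orth_pair_def)
  ultimately show "X \<subseteq> V \<and> Y = Yof V E X \<and> X = Xof V E Y" by simp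
next
  assume a: "X \<subseteq> V \<and> Y = Yof V E X \<and> X = Xof V E Y"
  have aV: "X \<subseteq> V" and aY: "Y = Yof V E X" and aX: "X = Xof V E Y" using a by blast+
  have "Yof V E X \<subseteq> V \<and> X \<inter> Yof V E X = {} \<and> (\<forall>x\<in>X. \<forall>y\<in>Yof V E X. \<not> E x y)"
    unfolding Yof_def by blast
  hence "Y \<subseteq> V \<and> X \<inter> Y = {} \<and> (\<forall>x\<in>X. \<forall>y\<in>Y. \<not> E x y)" using aY by simp
  hence o: "orth_pair V E (X,Y)" using aV by (simp add: orth_pair_def)
  show "max_orth_pair V E (X,Y)" unfolding max_orth_pair_def
  proof (intro conjI allI impI o)
    fix q assume q: "orth_pair V E q \<and> fst (X, Y) \<subseteq> fst q \<and> snd (X, Y) \<subseteq> snd q"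
    have "snd q \<subseteq> Yof V E X" using q by (auto simp: orth_pair_def Yof_def)
    hence "snd q = Y" using aY q by auto
    have "fst q \<subseteq> Xof V E Y" using q by (auto simp: orth_pair_def Xof_def)
    hence "fst q = X" using aX q by auto
    show "q = (X,Y)" using \<open>snd q = Y\<close> \<open>fst q = X\<close> by (simp add: prod_eq_iff)
  qed
qed

lemma Hoch_mem: "p \<in> Hoch n \<longleftrightarrow> fst p \<subseteq> Gn_vertices n \<and>
   snd p = Yof (Gn_vertices n) (Gn_edge n) (fst p) \<and> fst p = Xof (Gn_vertices n) (Gn_edge n) (snd p)"
  using max_orth_iff[of "Gn_vertices n" "Gn_edge n" "fst p" "snd p"]
  by (simp add: Hoch_def L_carrier_def)

lemma Hoch_D:
  assumes "p \<in> Hoch n"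
  shows "fst p \<subseteq> Gn_vertices n" "snd p = Yof (Gn_vertices n) (Gn_edge n) (fst p)"
    "fst p = Xof (Gn_vertices n) (Gn_edge n) (snd p)"
  using assms unfolding Hoch_mem by blast+

lemma Hoch_prefix:
  assumes p: "p \<in> Hoch n" and j: "(1,j) \<in> fst p" and k: "1 \<le> k" "k \<le> j"
  shows "(1,k) \<in> fst p"
proof (rule ccontr)
  assume nk: "(1,k) \<notin> fst p"
  let ?V = "Gn_vertices n" and ?E = "Gn_edge n"
  have sub: "fst p \<subseteq> ?V" and Y: "snd p = Yof ?V ?E (fst p)" and X: "fst p = Xof ?V ?E (snd p)"
    using Hoch_D[OF p] by blast+
  have jV: "(1,j) \<in> ?V" using sub j by auto
  hence kV: "(1,k) \<in> ?V" using k by (auto simp: Gn_vertices_def)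
  have "k < j" using nk j k by (cases "k = j") auto
  have "(1,k) \<notin> snd p"
  proof
    assume "(1,k) \<in> snd p"
    hence "\<not> ?E (1,j) (1,k)" using Y j by (auto simp: Yof_def)
    thus False using jV kV \<open>k<j\<close> by (auto simp: Gn_edge_def)
  qed
  then obtain y where y: "y \<in> snd p" "?E (1,k) y" using nk X kV by (auto simp: Xof_def)
  have "?E (1,j) y" using y(2) jV \<open>k<j\<close> by (auto simp: Gn_edge_def)
  thus False using Y y(1) j by (auto simp: Yof_def)
qed


definition fe :: "(nat \<times> nat) set \<times> (nat \<times> nat) set \<Rightarrow> nat \<Rightarrow> real" where
  "fe p = (\<lambda>i. if i = 0 then real (card {j. (1,j) \<in> fst p}) else if (2, i+1) \<in> fst p then 1 else 0)"

lemma J_sub: "p \<in> Hoch n \<Longrightarrow> {j. (1,j) \<in> fst p} \<subseteq> {1..n}"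
  using Hoch_D(1)[of p n] by (auto simp: Gn_vertices_def)

lemma fe_mono:
  assumes "p \<in> Hoch n" "q \<in> Hoch n" "fst p \<subseteq> fst q"
  shows "fe p i \<le> fe q i"
proof -
  have "finite {j. (1,j) \<in> fst q}" using J_sub[OF assms(2)] finite_subset by blast
  moreover have "{j. (1,j) \<in> fst p} \<subseteq> {j. (1,j) \<in> fst q}" using assms(3) by auto
  ultimately have "card {j. (1,j) \<in> fst p} \<le> card {j. (1,j) \<in> fst q}" by (rule card_mono)
  thus ?thesis using assms(3) by (auto simp: fe_def)
qed

lemma fe_reflect:
  assumes p: "p \<in> Hoch n" and q: "q \<in> Hoch n" and n: "n > 0" and le: "\<forall>i<n. fe p i \<le> fe q i"
  shows "fst p \<subseteq> fst q"
proof
  fix x assume x: "x \<in> fst p"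
  hence xV: "x \<in> Gn_vertices n" using p Hoch_D(1)[OF p] by blast
  then obtain a b where ab: "x = (a,b)" "a = 1 \<or> a = 2" "a \<le> b" "b \<le> n" by (auto simp: Gn_vertices_def)
  show "x \<in> fst q"
  proof (cases "a = 1")
    case True
    show ?thesis
    proof (rule ccontr)
      assume nq: "x \<notin> fst q"
      let ?J = "{j. (1,j) \<in> fst p}" and ?J' = "{j. (1,j) \<in> fst q}"
      have "?J' \<subseteq> {1..<b}"
      proof
        fix k assume k: "k \<in> ?J'"
        have "k \<ge> 1" using J_sub[OF q] k by auto
        moreover have "k < b"
        proof (rule ccontr)
          assume "\<not> k < b"
          hence "(1,b) \<in> fst q" using Hoch_prefix[OF q, of k b] k ab True by auto
          thus False using nq ab True by simp
        qed
        ultimately show "k \<in> {1..<b}" by auto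
      qed
      hence c1: "card ?J' \<le> b - 1" using card_mono[of "{1..<b}" ?J'] by auto
      have "{1..b} \<subseteq> ?J" using Hoch_prefix[OF p, of b] x ab True by auto
      moreover have "finite ?J" using J_sub[OF p] finite_subset by blast
      ultimately have c2: "b \<le> card ?J" using card_mono[of ?J "{1..b}"] by auto
      have "fe p 0 \<le> fe q 0" using le n by auto
      hence "card ?J \<le> card ?J'" by (simp add: fe_def)
      thus False using c1 c2 ab True by linarith
    qed
  next
    case False
    hence a2: "a = 2" using ab by auto
    have "b - 1 < n" "b - 1 \<noteq> 0" using ab a2 by auto
    hence "fe p (b-1) \<le> fe q (b-1)" using le by auto
    moreover have "fe p (b-1) = 1" using x ab a2 \<open>b - 1 \<noteq> 0\<close> by (simp add: fe_def)
    ultimately show ?thesis using ab a2 \<open>b - 1 \<noteq> 0\<close> by (auto simp: fe_def split: if_splits)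
  qed
qed

lemma upper: assumes "n > 0" shows "embeds_in_Rd (Hoch n) L_le n"
  unfolding embeds_in_Rd_def
proof (intro exI conjI ballI)
  show "inj_on fe (Hoch n)"
  proof (rule inj_onI)
    fix p q assume p: "p \<in> Hoch n" and q: "q \<in> Hoch n" and e: "fe p = fe q"
    have "fst p = fst q" using fe_reflect[OF p q assms] fe_reflect[OF q p assms] e by auto
    moreover hence "snd p = snd q" using Hoch_D(2)[OF p] Hoch_D(2)[OF q] by simp
    ultimately show "p = q" by (simp add: prod_eq_iff)
  qed
next
  fix p q assume p: "p \<in> Hoch n" and q: "q \<in> Hoch n"
  show "L_le p q = (\<forall>i<n. fe p i \<le> fe q i)"
    using fe_reflect[OF p q assms] fe_mono[OF p q] by (auto simp: L_le_def)
qed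

lemma std_example:
  assumes PQ: "\<forall>i<n. P i \<in> S \<and> Q i \<in> S"
    and off: "\<forall>i<n. \<forall>j<n. i \<noteq> j \<longrightarrow> le (P j) (Q i)"
    and diag: "\<forall>i<n. \<not> le (P i) (Q i)" and d: "d < n"
  shows "\<not> embeds_in_Rd S le d"
proof
  assume "embeds_in_Rd S le d"
  then obtain f :: "_ \<Rightarrow> nat \<Rightarrow> real" where
    f: "\<forall>x\<in>S. \<forall>y\<in>S. le x y \<longleftrightarrow> (\<forall>i<d. f x i \<le> f y i)"
    unfolding embeds_in_Rd_def by blast
  have "\<forall>i<n. \<exists>c<d. f (Q i) c < f (P i) c"
  proof (intro allI impI)
    fix i assume i: "i < n"
    hence "\<not> (\<forall>c<d. f (P i) c \<le> f (Q i) c)" using f PQ diag by blast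
    thus "\<exists>c<d. f (Q i) c < f (P i) c" by (auto simp: not_le)
  qed
  then obtain c where c: "\<forall>i<n. c i < d \<and> f (Q i) (c i) < f (P i) (c i)" by metis
  have "c ` {..<n} \<subseteq> {..<d}" using c by auto
  hence "\<not> inj_on c {..<n}" using d card_inj_on_le[of c "{..<n}" "{..<d}"] by auto
  then obtain i j where ij: "i < n" "j < n" "i \<noteq> j" "c i = c j" unfolding inj_on_def by auto
  have "le (P j) (Q i)" "le (P i) (Q j)" using off ij by auto
  hence "f (P j) (c i) \<le> f (Q i) (c i)" "f (P i) (c j) \<le> f (Q j) (c j)"
    using f PQ ij c by blast+
  moreover have "f (Q i) (c i) < f (P i) (c i)" "f (Q j) (c j) < f (P j) (c j)" using c ij by auto
  ultimately show False using ij(4) by simp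
qed


definition mk :: "nat \<Rightarrow> (nat \<times> nat) set \<Rightarrow> (nat \<times> nat) set \<times> (nat \<times> nat) set" where
  "mk n X = (X, Yof (Gn_vertices n) (Gn_edge n) X)"

lemma mk_mem:
  assumes "X \<subseteq> Gn_vertices n" "Xof (Gn_vertices n) (Gn_edge n) (Yof (Gn_vertices n) (Gn_edge n) X) = X"
  shows "mk n X \<in> Hoch n"
  using assms by (simp add: Hoch_mem mk_def)

lemma mem_b: assumes "2 \<le> k" "k \<le> n" shows "mk n {(2,k)} \<in> Hoch n"
proof (rule mk_mem)
  show "{(2,k)} \<subseteq> Gn_vertices n" using assms by (auto simp: Gn_vertices_def)
  have Y: "Yof (Gn_vertices n) (Gn_edge n) {(2,k)} = Gn_vertices n - {(2,k),(1,k)}"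
    using assms by (auto simp: Yof_def Gn_edge_def Gn_vertices_def)
  show "Xof (Gn_vertices n) (Gn_edge n) (Yof (Gn_vertices n) (Gn_edge n) {(2,k)}) = {(2,k)}"
    unfolding Y using assms
    apply (auto simp: Xof_def Gn_edge_def Gn_vertices_def)
    apply (drule bspec[where x="(1,1)"])
    by auto
qed

lemma mem_a1: assumes "1 \<le> n" shows "mk n {(1,1)} \<in> Hoch n"
proof (rule mk_mem)
  show "{(1,1)} \<subseteq> Gn_vertices n" using assms by (auto simp: Gn_vertices_def)
  have Y: "Yof (Gn_vertices n) (Gn_edge n) {(1,1)} = Gn_vertices n - {(1,1)}"
    using assms by (auto simp: Yof_def Gn_edge_def Gn_vertices_def)
  show "Xof (Gn_vertices n) (Gn_edge n) (Yof (Gn_vertices n) (Gn_edge n) {(1,1)}) = {(1,1)}"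
    unfolding Y using assms
    by (auto simp: Xof_def Gn_edge_def Gn_vertices_def)
qed

lemma aux_b: "Suc 0 \<le> b \<Longrightarrow> b \<le> n \<Longrightarrow> \<forall>ba. 2 \<le> ba \<and> ba \<le> n \<longrightarrow> ba \<noteq> b \<Longrightarrow> b = Suc 0"
  by (cases "b \<ge> 2") auto

lemma mem_B: shows "mk n {x\<in>Gn_vertices n. fst x = 2} \<in> Hoch n"
proof (rule mk_mem)
  show "{x\<in>Gn_vertices n. fst x = 2} \<subseteq> Gn_vertices n" by auto
  have Y: "Yof (Gn_vertices n) (Gn_edge n) {x\<in>Gn_vertices n. fst x = 2} = {(1,1)}
     \<inter> Gn_vertices n"
    by (auto simp: Yof_def Gn_edge_def Gn_vertices_def) (metis aux_b)
  show "Xof (Gn_vertices n) (Gn_edge n) (Yof (Gn_vertices n) (Gn_edge n) {x\<in>Gn_vertices n. fst x = 2})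
     = {x\<in>Gn_vertices n. fst x = 2}"
    unfolding Y by (auto simp: Xof_def Gn_edge_def Gn_vertices_def)
qed

lemma mem_a1': "0 < n \<Longrightarrow> mk n {(Suc 0, Suc 0)} \<in> Hoch n"
  using mem_a1[of n] by simp

lemma mem_Q: assumes "2 \<le> k" "k \<le> n" shows "mk n (Gn_vertices n - {(2,k)}) \<in> Hoch n"
proof (rule mk_mem)
  show "Gn_vertices n - {(2,k)} \<subseteq> Gn_vertices n" by auto
  have Y: "Yof (Gn_vertices n) (Gn_edge n) (Gn_vertices n - {(2,k)}) = {(2,k)}"
    using assms by (auto simp: Yof_def Gn_edge_def Gn_vertices_def)
  show "Xof (Gn_vertices n) (Gn_edge n) (Yof (Gn_vertices n) (Gn_edge n) (Gn_vertices n - {(2,k)}))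
     = Gn_vertices n - {(2,k)}"
    unfolding Y using assms by (auto simp: Xof_def Gn_edge_def Gn_vertices_def)
qed


lemma lower:
  assumes n: "n > 0" and d: "d < n"
  shows "\<not> embeds_in_Rd (Hoch n) L_le d"
proof -
  define P where "P i = (if i = n - 1 then mk n {(1,1)} else mk n {(2,i+2)})" for i
  define Q where "Q i = (if i = n - 1 then mk n {x\<in>Gn_vertices n. fst x = 2}
     else mk n (Gn_vertices n - {(2,i+2)}))" for i
  show ?thesis
  proof (rule std_example[of n P "Hoch n" Q])
    show "\<forall>i<n. P i \<in> Hoch n \<and> Q i \<in> Hoch n"
      using n by (auto simp: P_def Q_def intro!: mem_b mem_a1 mem_a1' mem_B mem_Q)
    show "\<forall>i<n. \<forall>j<n. i \<noteq> j \<longrightarrow> L_le (P j) (Q i)"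
      using n by (auto simp: P_def Q_def mk_def L_le_def Gn_vertices_def)
    show "\<forall>i<n. \<not> L_le (P i) (Q i)"
      using n by (auto simp: P_def Q_def mk_def L_le_def Gn_vertices_def)
  qed (rule d)
qed

theorem proposition4p3:
  fixes n :: nat
  assumes "n > 0"
  shows "order_dimension (Hoch n) L_le = n"
  unfolding order_dimension_def
proof (rule Least_equality)
  show "embeds_in_Rd (Hoch n) L_le n" using upper[OF assms] .
  fix d assume "embeds_in_Rd (Hoch n) L_le d"
  thus "n \<le> d" using lower[OF assms] by (meson not_le)
qed

end
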